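(* Let $T$ be a $P$-Petri net, let $F\subseteq P$, let $\rho$ be a $(T,F)$-stabilized $P$-configuration, let $h$ be a positive integer with $h\geq\|T\|_\infty(1+\|T\|_\infty)^{|P|^{|P|}}$, and let $R=\{p\in P\mid\rho(p)<h\}$. Then every $P$-configuration $\alpha$ with $\alpha|_R\leq\rho|_R$ is $(T,F)$-stabilized.
   Context: A $P$-configuration is a map in $\mathbb{N}^P$; $\alpha\leq\beta$ means $\beta=\alpha+\rho$ for some configuration $\rho$ (componentwise order). For a finite set $R$, $\rho|_R$ is the $R$-configuration with $\rho|_R(q)=\rho(q)$ if $q\in P$ and $0$ otherwise. A $P$-Petri net $T$ is a finite set of pairs $t=(\alpha_t,\beta_t)$ of $P$-configurations; $\alpha\xrightarrow{t}\beta$ iff $\alpha=\alpha_t+\rho$, $\beta=\beta_t+\rho$ for some $\rho$; $\alpha\xrightarrow{T^*}\beta$ iff $\beta$ is reachable from $\alpha$ by a finite sequence of such steps with transitions in $T$. $\|T\|_\infty$ is the maximum entry of all $\alpha_t,\beta_t$ for $t\in T$. A $P$-configuration $\rho$ is $(T,F)$-stabilized if every $\beta$ with $\rho\xrightarrow{T^*}\beta$ satisfies $\beta(p)=0$ for all $p\in P\setminus F$. *)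

theory Defs
  imports Main
begin

type_synonym 'p config = "'p \<Rightarrow> nat"
type_synonym 'p transition = "'p config \<times> 'p config"

definition is_config :: "'p set \<Rightarrow> 'p config \<Rightarrow> bool" where
  "is_config P \<alpha> \<longleftrightarrow> (\<forall>q. q \<notin> P \<longrightarrow> \<alpha> q = 0)"

definition is_petri_net :: "'p set \<Rightarrow> 'p transition set \<Rightarrow> bool" where
  "is_petri_net P T \<longleftrightarrow> finite T \<and> (\<forall>t\<in>T. is_config P (fst t) \<and> is_config P (snd t))"

definition restr :: "'p set \<Rightarrow> 'p config \<Rightarrow> 'p config" where
  "restr R \<rho> = (\<lambda>q. if q \<in> R then \<rho> q else 0)"

definition fires :: "'p set \<Rightarrow> 'p transition \<Rightarrow> 'p config \<Rightarrow> 'p config \<Rightarrow> bool" where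
  "fires P t \<alpha> \<beta> \<longleftrightarrow> (\<exists>\<rho>. is_config P \<rho> \<and> (\<forall>q. \<alpha> q = fst t q + \<rho> q) \<and> (\<forall>q. \<beta> q = snd t q + \<rho> q))"

definition reach :: "'p set \<Rightarrow> 'p transition set \<Rightarrow> 'p config \<Rightarrow> 'p config \<Rightarrow> bool" where
  "reach P T = (\<lambda>\<alpha> \<beta>. \<exists>t\<in>T. fires P t \<alpha> \<beta>)\<^sup>*\<^sup>*"

definition norm_inf :: "'p set \<Rightarrow> 'p transition set \<Rightarrow> nat" where
  "norm_inf P T = Max (insert 0 ({fst t p | t p. t \<in> T \<and> p \<in> P} \<union> {snd t p | t p. t \<in> T \<and> p \<in> P}))"

definition stabilized :: "'p set \<Rightarrow> 'p transition set \<Rightarrow> 'p set \<Rightarrow> 'p config \<Rightarrow> bool" where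
  "stabilized P T F \<rho> \<longleftrightarrow> (\<forall>\<beta>. reach P T \<rho> \<beta> \<longrightarrow> (\<forall>p \<in> P - F. \<beta> p = 0))"

end

theory Submission imports Defs "HOL-Library.FuncSet" begin

definition stp :: "'p set \<Rightarrow> 'p transition set \<Rightarrow> 'p config \<Rightarrow> 'p config \<Rightarrow> bool" where
  "stp S T c c' \<longleftrightarrow> (\<exists>t\<in>T. (\<forall>q\<in>S. fst t q \<le> c q) \<and>
     (\<forall>q. c' q = (if q \<in> S then c q - fst t q + snd t q else 0)))"

definition run :: "'p set \<Rightarrow> 'p transition set \<Rightarrow> (nat \<Rightarrow> 'p config) \<Rightarrow> nat \<Rightarrow> bool" where
  "run S T f n \<longleftrightarrow> (\<forall>i<n. stp S T (f i) (f (Suc i)))"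

fun G :: "nat \<Rightarrow> nat \<Rightarrow> nat" where
  "G M 0 = 0"
| "G M (Suc k) = (M * G M k + 1) ^ Suc k + G M k"

lemma stp_cong: "stp S T c c' \<Longrightarrow> \<forall>q\<in>S. c q = d q \<Longrightarrow> stp S T d c'"
  unfolding stp_def by (metis (no_types, lifting))

lemma stp_proj: "stp S T c c' \<Longrightarrow> S' \<subseteq> S \<Longrightarrow> stp S' T (restr S' c) (restr S' c')"
  unfolding stp_def restr_def by (smt (verit, best) subsetD)

lemma run_proj: "run S T f n \<Longrightarrow> S' \<subseteq> S \<Longrightarrow> run S' T (\<lambda>k. restr S' (f k)) n"
  unfolding run_def using stp_proj by blast

lemma run_shortcut:
  assumes "run S T f n" "i < j" "j \<le> n" "\<forall>q\<in>S. f i q = f j q"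
  shows "run S T (\<lambda>k. if k \<le> i then f k else f (k + (j - i))) (n - (j - i))
     \<and> (\<forall>q\<in>S. (if n - (j - i) \<le> i then f (n - (j - i)) else f (n - (j - i) + (j - i))) q = f n q)"
proof
  show "run S T (\<lambda>k. if k \<le> i then f k else f (k + (j - i))) (n - (j - i))"
    unfolding run_def
  proof (intro allI impI)
    fix k assume k: "k < n - (j - i)"
    show "stp S T (if k \<le> i then f k else f (k + (j - i))) (if Suc k \<le> i then f (Suc k) else f (Suc k + (j - i)))"
    proof (cases "k < i")
      case True then show ?thesis using assms(1,2,3) k unfolding run_def by auto
    next
      case False
      show ?thesis
      proof (cases "k = i")
        case True
        have "stp S T (f j) (f (Suc j))" using assms k True unfolding run_def by auto
        then have "stp S T (f i) (f (Suc j))" using stp_cong assms(4) by metis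
        then show ?thesis using True assms(2) by (auto simp: Suc_diff_le)
      next
        case False
        then have "k > i" using \<open>\<not> k < i\<close> by auto
        then have "stp S T (f (k + (j - i))) (f (Suc (k + (j - i))))" using assms k unfolding run_def by auto
        then show ?thesis using \<open>k > i\<close> by auto
      qed
    qed
  qed
  show "\<forall>q\<in>S. (if n - (j - i) \<le> i then f (n - (j - i)) else f (n - (j - i) + (j - i))) q = f n q"
  proof (cases "n - (j - i) \<le> i")
    case True
    then have "n = j" using assms by auto
    then show ?thesis using True assms by auto
  next
    case False then show ?thesis using assms by auto
  qed
qed

lemma run_concat:
  assumes "run S T f i" "run S T e m" "e 0 = f i"
  shows "run S T (\<lambda>k. if k \<le> i then f k else e (k - i)) (i + m)"
  unfolding run_def
proof (intro allI impI)
  fix k assume k: "k < i + m"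
  show "stp S T (if k \<le> i then f k else e (k - i)) (if Suc k \<le> i then f (Suc k) else e (Suc k - i))"
  proof (cases "k < i")
    case True then show ?thesis using assms unfolding run_def by auto
  next
    case False
    then have "stp S T (e (k - i)) (e (Suc (k - i)))" using assms k unfolding run_def by auto
    then show ?thesis using False assms(3) by (auto simp: Suc_diff_le)
  qed
qed

lemma run_lift:
  assumes "S' \<subseteq> S" and M: "\<forall>t\<in>T. \<forall>q. fst t q \<le> M"
  shows "run S' T h m \<Longrightarrow> \<forall>q\<in>S'. h 0 q \<le> d q \<Longrightarrow> \<forall>q\<in>S - S'. M * m \<le> d q \<Longrightarrow>
    \<exists>e. e 0 = d \<and> run S T e m \<and> (\<forall>q\<in>S'. h m q \<le> e m q) \<and> (\<forall>q\<in>S - S'. d q \<le> e m q + M * m)"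
proof (induction m)
  case 0
  show ?case using 0 by (intro exI[of _ "\<lambda>_. d"]) (auto simp: run_def)
next
  case (Suc m)
  have "run S' T h m" using Suc.prems unfolding run_def by auto
  moreover have "\<forall>q\<in>S - S'. M * m \<le> d q" using Suc.prems(3) 
    by (meson le_trans mult_le_mono2 le_SucI order_refl)
  ultimately obtain e where e: "e 0 = d" "run S T e m" "\<forall>q\<in>S'. h m q \<le> e m q"
      "\<forall>q\<in>S - S'. d q \<le> e m q + M * m" using Suc.IH Suc.prems(2) by blast
  have "stp S' T (h m) (h (Suc m))" using Suc.prems(1) unfolding run_def by auto
  then obtain t where t: "t \<in> T" "\<forall>q\<in>S'. fst t q \<le> h m q"
     "\<forall>q. h (Suc m) q = (if q \<in> S' then h m q - fst t q + snd t q else 0)"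
    unfolding stp_def by blast
  define c where "c = (\<lambda>q. if q \<in> S then e m q - fst t q + snd t q else 0)"
  have ge: "\<forall>q\<in>S. fst t q \<le> e m q"
  proof
    fix q assume q: "q \<in> S"
    show "fst t q \<le> e m q"
    proof (cases "q \<in> S'")
      case True then show ?thesis using t e by (meson le_trans)
    next
      case False
      have "M * Suc m \<le> d q" using Suc.prems(3) q False by auto
      moreover have "d q \<le> e m q + M * m" using e(4) q False by auto
      ultimately have "M \<le> e m q" by simp
      then show ?thesis using M t(1) by (meson le_trans)
    qed
  qed
  have st: "stp S T (e m) c" unfolding stp_def c_def using t(1) ge by blast
  define e' where "e' = e(Suc m := c)"
  have "run S T e' (Suc m)"
    using e(2) st unfolding run_def e'_def by (auto simp: less_Suc_eq)
  moreover have "e' 0 = d" using e(1) by (simp add: e'_def)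
  moreover have "\<forall>q\<in>S'. h (Suc m) q \<le> e' (Suc m) q"
    using t e(3) ge \<open>S' \<subseteq> S\<close> by (auto simp: e'_def c_def)
  moreover have "\<forall>q\<in>S - S'. d q \<le> e' (Suc m) q + M * Suc m"
  proof
    fix q assume q: "q \<in> S - S'"
    have "fst t q \<le> M" using M t(1) by auto
    moreover have "d q \<le> e m q + M * m" using e(4) q by auto
    moreover have "fst t q \<le> e m q" using ge q by auto
    ultimately show "d q \<le> e' (Suc m) q + M * Suc m" using q by (auto simp: e'_def c_def)
  qed
  ultimately show ?case by blast
qed

lemma pigeon:
  fixes f :: "nat \<Rightarrow> 'p config" and B N :: nat
  assumes "finite S" "\<forall>i<N. \<forall>q\<in>S. f i q < B" "B ^ card S < N"
  shows "\<exists>i j. i < j \<and> j < N \<and> (\<forall>q\<in>S. f i q = f j q)"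
proof -
  have sub: "(\<lambda>i. restrict (f i) S) ` {..<N} \<subseteq> PiE S (\<lambda>_. {..<B})"
    using assms(2) by auto
  have "card (PiE S (\<lambda>_. {..<B})) = B ^ card S"
    using assms(1) by (simp add: card_PiE)
  have "\<not> inj_on (\<lambda>i. restrict (f i) S) {..<N}"
  proof
    assume "inj_on (\<lambda>i. restrict (f i) S) {..<N}"
    then have "card {..<N} \<le> card (PiE S (\<lambda>_. {..<B}))"
      using sub by (intro card_inj_on_le) (auto simp: assms(1) finite_PiE)
    then show False using assms(3) \<open>card (PiE S (\<lambda>_. {..<B})) = B ^ card S\<close> by simp
  qed
  then obtain i j where ij: "i < N" "j < N" "i \<noteq> j" "restrict (f i) S = restrict (f j) S"
    unfolding inj_on_def by auto
  then have eq: "\<forall>q\<in>S. f i q = f j q" by (metis restrict_apply')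
  show ?thesis
  proof (cases "i < j")
    case True then show ?thesis using ij eq by blast
  next
    case False then show ?thesis using ij eq by (intro exI[of _ j] exI[of _ i]) auto
  qed
qed

lemma rackoff:
  assumes M: "\<forall>t\<in>T. \<forall>q. fst t q \<le> M"
  shows "finite S \<Longrightarrow> card S = k \<Longrightarrow> run S T f n \<Longrightarrow> (p \<in> S \<longrightarrow> 1 \<le> f n p) \<Longrightarrow>
    \<exists>g m. g 0 = f 0 \<and> run S T g m \<and> (p \<in> S \<longrightarrow> 1 \<le> g m p) \<and> m \<le> G M k"
proof (induction k arbitrary: S f n)
  case 0
  then have "S = {}" by auto
  then show ?case by (intro exI[of _ f] exI[of _ 0]) (auto simp: run_def)
next
  case (Suc k)
  define Q where "Q = (\<lambda>n. \<exists>g. g 0 = f 0 \<and> run S T g n \<and> (p \<in> S \<longrightarrow> 1 \<le> g n p))"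
  have "Q n" unfolding Q_def using Suc.prems by blast
  then obtain n0 where "Q n0" and minl: "\<forall>m<n0. \<not> Q m" using exists_least_iff[of Q] by blast
  then obtain g where g: "g 0 = f 0" "run S T g n0" "p \<in> S \<longrightarrow> 1 \<le> g n0 p" unfolding Q_def by blast
  define B where "B = M * G M k + 1"
  have noshort: False if "i < j" "j \<le> n0" "\<forall>q\<in>S. g i q = g j q" for i j
  proof -
    from run_shortcut[OF g(2) that] have
      "run S T (\<lambda>k. if k \<le> i then g k else g (k + (j - i))) (n0 - (j - i))"
      "(\<forall>q\<in>S. (if n0 - (j - i) \<le> i then g (n0 - (j - i)) else g (n0 - (j - i) + (j - i))) q = g n0 q)"
      by auto
    then have "Q (n0 - (j - i))" unfolding Q_def using g(1,3)
      by (intro exI[of _ "\<lambda>k. if k \<le> i then g k else g (k + (j - i))"]) auto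
    then show False using minl that by auto
  qed
  show ?case
  proof (cases "\<forall>i\<le>n0. \<forall>q\<in>S. g i q < B")
    case True
    have "\<not> B ^ card S < Suc n0"
    proof
      assume "B ^ card S < Suc n0"
      then obtain i j where "i < j" "j < Suc n0" "\<forall>q\<in>S. g i q = g j q"
        using pigeon[of S "Suc n0" g B] Suc.prems(1) True by auto
      then show False using noshort[of i j] by simp
    qed
    then have "n0 \<le> G M (Suc k)" using Suc.prems(2) by (simp add: B_def)
    then show ?thesis using g by blast
  next
    case False
    then have "\<exists>i. i \<le> n0 \<and> (\<exists>q\<in>S. B \<le> g i q)" by (auto simp: not_less)
    then obtain i where i: "i \<le> n0" "\<exists>q\<in>S. B \<le> g i q"
       and imin: "\<forall>i'<i. \<not> (i' \<le> n0 \<and> (\<exists>q\<in>S. B \<le> g i' q))"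
      using exists_least_iff[of "\<lambda>i. i \<le> n0 \<and> (\<exists>q\<in>S. B \<le> g i q)"] by blast
    obtain j where j: "j \<in> S" "B \<le> g i j" using i by blast
    have ib: "i \<le> B ^ card S"
    proof (rule ccontr)
      assume "\<not> i \<le> B ^ card S"
      then have "B ^ card S < i" by simp
      moreover have "\<forall>i'<i. \<forall>q\<in>S. g i' q < B" using imin i(1) by (auto simp: not_le)
      ultimately obtain a b where "a < b" "b < i" "\<forall>q\<in>S. g a q = g b q"
        using pigeon[of S i g B] Suc.prems(1) by auto
      then show False using noshort[of a b] i(1) by simp
    qed
    define S' where "S' = S - {j}"
    have S'S: "S' \<subseteq> S" and fS': "finite S'" and cS': "card S' = k"
      using Suc.prems(1,2) j(1) by (auto simp: S'_def)
    have r1: "run S T (\<lambda>k. g (i + k)) (n0 - i)" using g(2) i(1) unfolding run_def by auto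
    have r2: "run S' T (\<lambda>k. restr S' (g (i + k))) (n0 - i)" using run_proj[OF r1 S'S] by simp
    have "p \<in> S' \<longrightarrow> 1 \<le> restr S' (g (i + (n0 - i))) p" using g(3) i(1) S'S by (auto simp: restr_def)
    from Suc.IH[OF fS' cS' r2 this] obtain h m where h: "h 0 = restr S' (g i)" "run S' T h m"
       "p \<in> S' \<longrightarrow> 1 \<le> h m p" "m \<le> G M k" by auto
    have "M * m \<le> M * G M k" using h(4) by simp
    have Mm: "\<forall>q\<in>S - S'. M * m \<le> g i q" 
    proof
      fix q assume "q \<in> S - S'"
      then have "q = j" by (auto simp: S'_def)
      have "M * m \<le> g i j" using j(2) \<open>M * m \<le> M * G M k\<close> unfolding B_def by linarith
      then show "M * m \<le> g i q" using \<open>q = j\<close> by simp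
    qed
    have "\<forall>q\<in>S'. h 0 q \<le> g i q" using h(1) by (auto simp: restr_def)
    from run_lift[OF S'S M h(2) this Mm] obtain e where e: "e 0 = g i" "run S T e m"
      "\<forall>q\<in>S'. h m q \<le> e m q" "\<forall>q\<in>S - S'. g i q \<le> e m q + M * m" by blast
    have rg: "run S T g i" using g(2) i(1) unfolding run_def by auto
    have rc: "run S T (\<lambda>k. if k \<le> i then g k else e (k - i)) (i + m)"
      using run_concat[OF rg e(2)] e(1) by simp
    have cov: "p \<in> S \<longrightarrow> 1 \<le> e m p"
    proof
      assume "p \<in> S"
      show "1 \<le> e m p"
      proof (cases "p = j")
        case True
        have "g i j \<le> e m j + M * m" using e(4) j(1) by (auto simp: S'_def)
        then have "1 \<le> e m j" using j(2) \<open>M * m \<le> M * G M k\<close> unfolding B_def by linarith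
        then show ?thesis using True by simp
      next
        case False
        then show ?thesis using h(3) e(3) \<open>p \<in> S\<close> by (force simp: S'_def)
      qed
    qed
    have "i + m \<le> G M (Suc k)" using ib h(4) Suc.prems(2) by (simp add: B_def)
    moreover have "(if i + m \<le> i then g (i + m) else e (i + m - i)) = e m"
      using e(1) by auto
    ultimately show ?thesis using rc cov g(1)
      by (intro exI[of _ "\<lambda>k. if k \<le> i then g k else e (k - i)"] exI[of _ "i + m"]) auto
  qed
qed


lemma G_mono: "k \<le> l \<Longrightarrow> G M k \<le> G M l"
  by (rule lift_Suc_mono_le[of "G M"]) auto

lemma exp_ineq:
  fixes k :: nat assumes "2 \<le> k"
  shows "1 + (k+1) + (k+1)*k^k \<le> (k+1)^(k+1)"
proof -
  obtain l where l: "k = Suc l" using assms by (cases k) auto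
  have "k ^ l \<le> (k+1)^l" by (simp add: power_mono)
  then have "(k+1) * k^l \<le> (k+1)*(k+1)^l" by (rule mult_le_mono2)
  also have "(k+1)*(k+1)^l = (k+1)^k" using l by simp
  finally have "(k+1) * k^l \<le> (k+1)^k" .
  moreover have "(k+1) * k^l = k^k + k^l" using l by (simp add: algebra_simps)
  moreover have "k \<le> k^l" using l assms
    using self_le_power[of k l] by simp
  ultimately have "k^k + 2 \<le> (k+1)^k" using assms by linarith
  then have "(k+1)*(k^k + 2) \<le> (k+1)*(k+1)^k" by (rule mult_le_mono2)
  then show ?thesis by (simp add: algebra_simps)
qed

lemma G_bound: assumes "1 \<le> M" shows "G M k \<le> (1+M)^(k^k)"
proof (induction k)
  case 0 then show ?case by simp
next
  case (Suc k)
  define a where "a = 1 + M"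
  have a2: "2 \<le> a" using assms by (simp add: a_def)
  show ?case
  proof (cases "k \<le> 1")
    case True
    then consider "k = 0" | "k = 1" by linarith
    then show ?thesis
    proof cases
      case 1 then show ?thesis by simp
    next
      case 2
      have "a^2 + 1 \<le> a^4"
      proof -
        have "a^2 * 1 + 1 \<le> a^2 * 4" using a2 by simp
        also have "a^2 * 4 \<le> a^2 * a^2" using a2 mult_le_mono[of 2 a 2 a] by (intro mult_le_mono2) (simp add: power2_eq_square)
        finally show ?thesis by (simp flip: power_add)
      qed
      then show ?thesis using 2 by (simp add: a_def numeral_eq_Suc algebra_simps)
    qed
  next
    case False
    define X where "X = a^(k^k)"
    have X1: "1 \<le> X" using a2 by (simp add: X_def)
    have "M * G M k + 1 \<le> M * X + 1" using Suc.IH by (simp add: X_def a_def)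
    also have "\<dots> \<le> a * X" using X1 by (simp add: a_def algebra_simps)
    finally have "(M * G M k + 1)^(Suc k) \<le> (a*X)^(Suc k)" by (rule power_mono) simp
    moreover have "G M k \<le> (a*X)^(Suc k)"
    proof -
      have "G M k \<le> X" using Suc.IH by (simp add: X_def a_def)
      also have "X \<le> a*X" using a2 by simp
      also have "a*X \<le> (a*X)^(Suc k)" using a2 X1 by (intro self_le_power) auto
      finally show ?thesis .
    qed
    ultimately have "G M (Suc k) \<le> 2 * (a*X)^(Suc k)" by simp
    also have "\<dots> \<le> a * (a*X)^(Suc k)" using a2 by simp
    also have "\<dots> = a^(1 + (k+1) + (k+1)*k^k)"
      by (simp add: X_def power_mult_distrib power_add power_mult[symmetric] algebra_simps)
    also have "\<dots> \<le> a^((k+1)^(k+1))"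
      using exp_ineq[of k] False a2 by (intro power_increasing) auto
    finally show ?thesis by (simp add: a_def)
  qed
qed


lemma fires_stp:
  assumes "is_config P x" "fires P t x y" "t \<in> T" "is_petri_net P T"
  shows "stp P T x y \<and> is_config P y"
proof -
  obtain r where r: "is_config P r" "\<forall>q. x q = fst t q + r q" "\<forall>q. y q = snd t q + r q"
    using assms(2) unfolding fires_def by blast
  have "is_config P (snd t)" using assms(3,4) unfolding is_petri_net_def by auto
  then have yc: "is_config P y" using r(1,3) unfolding is_config_def by simp
  have "\<forall>q\<in>P. fst t q \<le> x q" using r(2) by simp
  moreover have "\<forall>q. y q = (if q \<in> P then x q - fst t q + snd t q else 0)"
    using r yc unfolding is_config_def by auto
  ultimately show ?thesis using assms(3) yc unfolding stp_def by blast
qed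

lemma reach_run:
  assumes "is_config P \<alpha>" "reach P T \<alpha> \<beta>" "is_petri_net P T"
  shows "\<exists>f n. f 0 = \<alpha> \<and> run P T f n \<and> f n = \<beta>"
proof -
  have "\<exists>f n. f 0 = \<alpha> \<and> run P T f n \<and> f n = \<beta> \<and> is_config P \<beta>"
    using assms(2) unfolding reach_def
  proof (induction rule: rtranclp_induct)
    case base
    show ?case using assms(1) by (intro exI[of _ "\<lambda>_. \<alpha>"] exI[of _ 0]) (auto simp: run_def)
  next
    case (step y z)
    then obtain f n where f: "f 0 = \<alpha>" "run P T f n" "f n = y" "is_config P y" by blast
    obtain t where "t \<in> T" "fires P t y z" using step(2) by blast
    then have sz: "stp P T y z" "is_config P z" using fires_stp f(4) assms(3) by blast+
    define g where "g = f(Suc n := z)"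
    have "run P T g (Suc n)"
      using f(2,3) sz(1) unfolding run_def g_def by (auto simp: less_Suc_eq)
    moreover have "g 0 = \<alpha>" "g (Suc n) = z" using f(1) by (auto simp: g_def)
    ultimately show ?case using sz(2) by blast
  qed
  then show ?thesis by blast
qed

lemma run_reach:
  assumes "is_petri_net P T" "is_config P (f 0)"
  shows "run P T f n \<Longrightarrow> reach P T (f 0) (f n) \<and> is_config P (f n)"
proof (induction n)
  case 0 then show ?case using assms(2) by (simp add: reach_def)
next
  case (Suc n)
  have "run P T f n" using Suc.prems unfolding run_def by auto
  then have IH: "reach P T (f 0) (f n)" "is_config P (f n)" using Suc.IH by auto
  obtain t where t: "t \<in> T" "\<forall>q\<in>P. fst t q \<le> f n q"
    "\<forall>q. f (Suc n) q = (if q \<in> P then f n q - fst t q + snd t q else 0)"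
    using Suc.prems unfolding run_def stp_def by blast
  have tc: "is_config P (fst t)" "is_config P (snd t)" using assms(1) t(1) unfolding is_petri_net_def by auto
  define r where "r = (\<lambda>q. if q \<in> P then f n q - fst t q else 0)"
  have "is_config P r" unfolding r_def is_config_def by auto
  moreover have "\<forall>q. f n q = fst t q + r q" using t(2) IH(2) tc unfolding r_def is_config_def by auto
  moreover have "\<forall>q. f (Suc n) q = snd t q + r q" using t(3) tc unfolding r_def is_config_def by auto
  ultimately have "fires P t (f n) (f (Suc n))" unfolding fires_def by blast
  then have "reach P T (f n) (f (Suc n))" using t(1) unfolding reach_def by blast
  then have "reach P T (f 0) (f (Suc n))" using IH(1) unfolding reach_def by auto
  moreover have "is_config P (f (Suc n))" using t(3) unfolding is_config_def by auto
  ultimately show ?case by blast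
qed

lemma norm_bound:
  assumes "finite P" "is_petri_net P T"
  shows "\<forall>t\<in>T. \<forall>q. fst t q \<le> norm_inf P T"
proof (intro ballI allI)
  fix t q assume t: "t \<in> T"
  show "fst t q \<le> norm_inf P T"
  proof (cases "q \<in> P")
    case False
    then have "fst t q = 0" using assms(2) t unfolding is_petri_net_def is_config_def by auto
    then show ?thesis by simp
  next
    case True
    have fT: "finite T" using assms(2) unfolding is_petri_net_def by auto
    have f1: "finite {fst t p | t p. t \<in> T \<and> p \<in> P}"
      by (rule finite_subset[of _ "(\<lambda>(t,p). fst t p) ` (T \<times> P)"]) (force intro: rev_image_eqI, simp add: fT assms(1))
    have f2: "finite {snd t p | t p. t \<in> T \<and> p \<in> P}"
      by (rule finite_subset[of _ "(\<lambda>(t,p). snd t p) ` (T \<times> P)"]) (force intro: rev_image_eqI, simp add: fT assms(1))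
    have "fst t q \<in> insert 0 ({fst t p | t p. t \<in> T \<and> p \<in> P} \<union> {snd t p | t p. t \<in> T \<and> p \<in> P})"
      using t True by blast
    then show ?thesis unfolding norm_inf_def using f1 f2 by (intro Max_ge) auto
  qed
qed


theorem lemma5p4:
  fixes P :: "'p set" and T :: "'p transition set" and F :: "'p set"
    and \<rho> :: "'p config" and h :: nat and R :: "'p set"
  assumes "finite P"
    and "is_petri_net P T"
    and "F \<subseteq> P"
    and "is_config P \<rho>"
    and "stabilized P T F \<rho>"
    and "h > 0"
    and "h \<ge> norm_inf P T * (1 + norm_inf P T) ^ (card P ^ card P)"
    and "R = {p \<in> P. \<rho> p < h}"
  shows "\<forall>\<alpha>. is_config P \<alpha> \<and> restr R \<alpha> \<le> restr R \<rho> \<longrightarrow> stabilized P T F \<alpha>"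
proof (intro allI impI)
  fix \<alpha> assume A: "is_config P \<alpha> \<and> restr R \<alpha> \<le> restr R \<rho>"
  define M where "M = norm_inf P T"
  have Mb: "\<forall>t\<in>T. \<forall>q. fst t q \<le> M" using norm_bound[OF assms(1,2)] by (simp add: M_def)
  show "stabilized P T F \<alpha>"
    unfolding stabilized_def
  proof (intro allI impI ballI)
    fix \<beta> p assume rb: "reach P T \<alpha> \<beta>" and p: "p \<in> P - F"
    show "\<beta> p = 0"
    proof (rule ccontr)
      assume nz: "\<beta> p \<noteq> 0"
      have "reach P T \<rho> \<rho>" by (simp add: reach_def)
      then have "\<rho> p = 0" using assms(5) p unfolding stabilized_def by blast
      then have pR: "p \<in> R" using p assms(6,8) by auto
      have RP: "R \<subseteq> P" using assms(8) by auto
      obtain f n where f: "f 0 = \<alpha>" "run P T f n" "f n = \<beta>"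
        using reach_run[OF _ rb assms(2)] A by blast
      have r2: "run R T (\<lambda>k. restr R (f k)) n" using run_proj[OF f(2) RP] .
      have "p \<in> R \<longrightarrow> 1 \<le> restr R (f n) p" using nz f(3) pR by (simp add: restr_def)
      from rackoff[OF Mb _ refl r2 this] obtain g m where g: "g 0 = restr R \<alpha>" "run R T g m"
        "p \<in> R \<longrightarrow> 1 \<le> g m p" "m \<le> G M (card R)"
        using finite_subset[OF RP assms(1)] f(1) by auto
      have le1: "\<forall>q\<in>R. g 0 q \<le> \<rho> q"
      proof
        fix q assume "q \<in> R"
        have "restr R \<alpha> q \<le> restr R \<rho> q" using A by (simp add: le_fun_def)
        then show "g 0 q \<le> \<rho> q" using \<open>q \<in> R\<close> g(1) by (simp add: restr_def)
      qed
      have "M * m \<le> M * G M (card P)"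
        using g(4) G_mono[OF card_mono[OF assms(1) RP], of M] by simp
      also have "\<dots> \<le> M * (1 + M) ^ (card P ^ card P)"
        using G_bound[of M "card P"] by (cases "M = 0") auto
      also have "\<dots> \<le> h" using assms(7) by (simp add: M_def)
      finally have Mh: "M * m \<le> h" .
      have le2: "\<forall>q\<in>P - R. M * m \<le> \<rho> q" using Mh assms(8) by auto
      from run_lift[OF RP Mb g(2) le1 le2] obtain e where e: "e 0 = \<rho>" "run P T e m"
        "\<forall>q\<in>R. g m q \<le> e m q" by blast
      have "reach P T \<rho> (e m)" using run_reach[OF assms(2), of e m] e assms(4) by simp
      then have "e m p = 0" using assms(5) p unfolding stabilized_def by blast
      moreover have "1 \<le> e m p" using g(3) e(3) pR by force
      ultimately show False by simp
    qed
  qed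
qed

end
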